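(* Let $d\geq 3$ and $s_1\leq s_2\leq\cdots\leq s_{d-1}$ be positive integers. Then $$\binom{s_1+s_2+\cdots+s_{d-1}}{s_1} < 2^{s_1-1}d$$ if and only if $s_1=s_2=\cdots=s_{d-1}=1$. *)

theory Defs
  imports Main
begin

end

theory Submission
  imports Defs Complex_Main
begin

lemma L1:
  fixes n k :: nat
  assumes "2 * k \<le> n"
  shows "2 ^ k \<le> n choose k"
proof (cases "k = 0")
  case True then show ?thesis by simp
next
  case False
  have "(2::real) ^ k \<le> (real n / real k) ^ k"
    using False assms by (intro power_mono) (auto simp: field_simps)
  also have "\<dots> \<le> real (n choose k)"
    using assms by (intro binomial_ge_n_over_k_pow_k) simp
  finally have "real (2 ^ k) \<le> real (n choose k)" by simp
  then show ?thesis by linarith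
qed

lemma L2:
  fixes a :: nat
  assumes "a \<ge> 2"
  shows "3 * 2 ^ (a - 1) \<le> (2 * a) choose a"
proof -
  obtain b where b: "a = Suc (Suc b)" using assms by (metis add_2_eq_Suc le_Suc_ex)
  have e1: "(2 * a) choose a = ((2*a - 1) choose (a - 1)) + ((2*a - 1) choose a)"
    using b by (simp add: binomial_Suc_Suc[symmetric] del: binomial_Suc_Suc)
  have e2: "(2*a - 1) choose a = (2*a - 1) choose (a - 1)"
    using b binomial_symmetric[of a "2*a-1"] by simp
  have e3: "(2*a - 1) choose (a - 1) = ((2*a - 2) choose (a - 1)) + ((2*a - 2) choose (a - 2))"
    using b by (simp add: numeral_2_eq_2)
  have "2 ^ (a - 1) \<le> (2*a - 2) choose (a - 1)" using b by (intro L1) simp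
  moreover have "2 ^ (a - 2) \<le> (2*a - 2) choose (a - 2)" using b by (intro L1) simp
  moreover have "(2::nat) ^ (a - 1) = 2 * 2 ^ (a - 2)" using b by simp
  ultimately show ?thesis using e1 e2 e3 by linarith
qed

lemma L3:
  fixes a x :: nat
  assumes "a \<ge> 2" "x \<ge> 2 * a"
  shows "3 * 2 ^ (a - 1) + (x - 2 * a) * 2 ^ (a - 1) \<le> x choose a"
  using assms(2)
proof (induction x rule: dec_induct)
  case base
  then show ?case using L2[OF assms(1)] by simp
next
  case (step x)
  obtain b where b: "a = Suc b" using assms by (metis Suc_pred not_numeral_le_zero not_gr0 le0 le_antisym)
  have "Suc x choose a = (x choose b) + (x choose a)" using b by simp
  moreover have "2 ^ (a - 1) \<le> x choose b" unfolding b diff_Suc_1 by (rule L1) (use b step.hyps in simp)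
  moreover have "Suc x - 2 * a = Suc (x - 2 * a)" using step by simp
  ultimately show ?case using step.IH by simp
qed

theorem lemmaA1:
  fixes d :: nat and s :: "nat \<Rightarrow> nat"
  assumes "d \<ge> 3"
    and "\<And>i. 1 \<le> i \<Longrightarrow> i \<le> d - 1 \<Longrightarrow> s i > 0"
    and "\<And>i j. 1 \<le> i \<Longrightarrow> i \<le> j \<Longrightarrow> j \<le> d - 1 \<Longrightarrow> s i \<le> s j"
  shows "((\<Sum>i=1..d-1. s i) choose (s 1) < 2 ^ (s 1 - 1) * d)
     \<longleftrightarrow> (\<forall>i\<in>{1..d-1}. s i = 1)"
proof
  assume all: "\<forall>i\<in>{1..d-1}. s i = 1"
  have "(\<Sum>i=1..d-1. s i) = (\<Sum>i=1..d-1. 1)" using all by (intro sum.cong) auto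
  then have S: "(\<Sum>i=1..d-1. s i) = d - 1" by simp
  have "s 1 = 1" using all assms(1) by auto
  then show "(\<Sum>i=1..d-1. s i) choose (s 1) < 2 ^ (s 1 - 1) * d" using S assms(1) by simp
next
  assume lt: "(\<Sum>i=1..d-1. s i) choose (s 1) < 2 ^ (s 1 - 1) * d"
  show "\<forall>i\<in>{1..d-1}. s i = 1"
  proof (rule ccontr)
    assume "\<not> (\<forall>i\<in>{1..d-1}. s i = 1)"
    then obtain j where j: "j \<in> {1..d-1}" "s j \<noteq> 1" by blast
    define a where "a = s 1"
    define S where "S = (\<Sum>i=1..d-1. s i)"
    have apos: "a > 0" unfolding a_def using assms(1,2) by simp
    have ge: "\<And>i. i \<in> {1..d-1} \<Longrightarrow> a \<le> s i" unfolding a_def using assms(3) by auto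
    have Sge: "(d - 1) * a \<le> S"
    proof -
      have "(\<Sum>i=1..d-1. a) \<le> S" unfolding S_def by (intro sum_mono ge)
      then show ?thesis by simp
    qed
    show False
    proof (cases "a = 1")
      case True
      have "s j > 1" using j assms(2) by force
      have "(\<Sum>i=1..d-1. 1) < S" unfolding S_def
        using j \<open>s j > 1\<close> ge True by (intro sum_strict_mono_ex1) auto
      then have "d \<le> S" using assms(1) by simp
      then show False using lt True unfolding a_def S_def by simp
    next
      case False
      then have a2: "a \<ge> 2" using apos by simp
      have "(d - 1) * a \<ge> 2 * a" using assms(1) by (intro mult_right_mono) auto
      then have "S \<ge> 2 * a" using Sge by linarith
      then have c: "3 * 2 ^ (a - 1) + (S - 2 * a) * 2 ^ (a - 1) \<le> S choose a"
        using L3 a2 by blast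
      have "(d - 1) * a - 2 * a = (d - 3) * a" by (simp add: diff_mult_distrib)
      also have "\<dots> \<ge> d - 3" using apos by simp
      finally have "S - 2 * a \<ge> d - 3" using Sge by linarith
      then have "(d - 3) * 2 ^ (a - 1) \<le> (S - 2 * a) * 2 ^ (a - 1)" by simp
      moreover have "2 ^ (a - 1) * d = 3 * 2 ^ (a - 1) + (d - 3) * 2 ^ (a - 1)"
        using assms(1) by (simp add: algebra_simps)
      ultimately have "2 ^ (a - 1) * d \<le> S choose a" using c by linarith
      then show False using lt unfolding a_def S_def by simp
    qed
  qed
qed

end
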